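(* Let $n\ge 7$, $\zeta_n=e^{2\pi i/n}$, $K=\mathbb{Q}(\zeta_n)$, and let $J=\{j_1<\dots<j_k\}\subseteq\{0,1,\dots,n-1\}$ with $k\ge 3$ and $j_k\le (n-1)/2$, such that the elements of $J$ do not form an arithmetic progression. Let $G$ be the $k\times n$ matrix over $K$ with $G_{i,l}=\zeta_n^{j_i(l-1)}$, and assume all $k\times k$ submatrices of $G$ have non-zero determinant in $K$. Let $P_{\mathrm{bad}}$ be the set of rational primes dividing $|N_{K/\mathbb{Q}}(\Delta)|$ for some such determinant $\Delta$. Let $p\notin P_{\mathrm{bad}}$ be a prime with $p\nmid n$, $\mathfrak{p}$ a prime ideal of $\mathbb{Z}[\zeta_n]$ above $p$, $\mathbb{F}_q\cong\mathbb{Z}[\zeta_n]/\mathfrak{p}$ ($q=p^f$, $f$ the multiplicative order of $p$ mod $n$), and $\overline{\mathcal{C}}$ the code over $\mathbb{F}_q$ generated by the reduction of $G$ modulo $\mathfrak{p}$. Then $\overline{\mathcal{C}}$ (a cyclic $[n,k]$ MDS code) is of non-RS type.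
   Context: A (generalized) Reed–Solomon code over a field $F$ has a generator matrix $(v_j x_j^{i-1})_{1\le i\le k,1\le j\le n}$ with distinct $x_j\in F$ and $v_j\in F^\times$; a code is of RS type if it is equivalent to such a code (by change of generator matrix, column permutation and non-zero column scaling), and of non-RS type otherwise. $N_{K/\mathbb{Q}}$ is the field norm. *)

theory Defs
  imports Complex_Main "HOL-Computational_Algebra.Polynomial"
    "Jordan_Normal_Form.Determinant" "Jordan_Normal_Form.DL_Submatrix"
begin

definition row_space :: "'a::field mat \<Rightarrow> 'a vec set" where
  "row_space G = {transpose_mat G *\<^sub>v a | a. a \<in> carrier_vec (dim_row G)}"

text \<open>Generator matrix (v_j x_j^(i-1)) of a generalized Reed-Solomon code (0-based indices).\<close>
definition GRS_matrix :: "nat \<Rightarrow> nat \<Rightarrow> (nat \<Rightarrow> 'a::field) \<Rightarrow> (nat \<Rightarrow> 'a) \<Rightarrow> 'a mat" where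
  "GRS_matrix k n x v = mat k n (\<lambda>(i, j). v j * x j ^ i)"

definition is_GRS_code :: "nat \<Rightarrow> nat \<Rightarrow> 'a::field vec set \<Rightarrow> bool" where
  "is_GRS_code k n C \<longleftrightarrow> (\<exists>x v. inj_on x {0..<n} \<and> (\<forall>j<n. v j \<noteq> 0)
      \<and> C = row_space (GRS_matrix k n x v))"

text \<open>Equivalence of codes: column permutation and non-zero column scaling
  (change of generator matrix is built in, since codes are sets of codewords).\<close>
definition code_equiv :: "nat \<Rightarrow> 'a::field vec set \<Rightarrow> 'a vec set \<Rightarrow> bool" where
  "code_equiv n C D \<longleftrightarrow> (\<exists>\<sigma> c. \<sigma> permutes {0..<n} \<and> (\<forall>j<n. c j \<noteq> 0)
      \<and> D = (\<lambda>w. vec n (\<lambda>j. c j * w $ (\<sigma> j))) ` C)"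

definition RS_type :: "nat \<Rightarrow> nat \<Rightarrow> 'a::field vec set \<Rightarrow> bool" where
  "RS_type k n C \<longleftrightarrow> (\<exists>D. is_GRS_code k n D \<and> code_equiv n D C)"

definition zeta :: "nat \<Rightarrow> complex" where
  "zeta n = exp (2 * pi * \<i> / of_nat n)"

definition Zzeta :: "nat \<Rightarrow> complex set" where
  "Zzeta n = {poly (map_poly of_int f) (zeta n) | f :: int poly. True}"

text \<open>The k x n matrix G with G_{i,l} = z^(j_i * l) (0-based), for a root of unity z.\<close>
definition Gmat :: "nat \<Rightarrow> nat list \<Rightarrow> 'a::comm_ring_1 \<Rightarrow> 'a mat" where
  "Gmat n js z = mat (length js) n (\<lambda>(i, l). z ^ (js ! i * l))"

definition minorG :: "nat \<Rightarrow> nat list \<Rightarrow> complex \<Rightarrow> nat set \<Rightarrow> complex" where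
  "minorG n js z S = det (submatrix (Gmat n js z) {0..<length js} S)"

text \<open>Field norm N_{K/Q} of the minor Delta_S \<in> K = Q(zeta_n): product of its images under
  all embeddings K \<rightarrow> C, i.e. zeta_n \<mapsto> zeta_n^a with gcd(a,n)=1.  Since Delta_S is an
  integer polynomial expression in zeta_n, its image is the same minor with zeta_n^a.\<close>
definition norm_minor :: "nat \<Rightarrow> nat list \<Rightarrow> nat set \<Rightarrow> complex" where
  "norm_minor n js S = (\<Prod>a\<in>{a\<in>{1..n}. coprime a n}. minorG n js (zeta n ^ a) S)"

definition P_bad :: "nat \<Rightarrow> nat list \<Rightarrow> nat set" where
  "P_bad n js = {p. prime p \<and> (\<exists>S m. S \<subseteq> {0..<n} \<and> card S = length js \<and>
       norm_minor n js S = of_int m \<and> int p dvd \<bar>m\<bar>)}"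

definition is_arith_prog :: "nat list \<Rightarrow> bool" where
  "is_arith_prog js \<longleftrightarrow> (\<exists>a d. \<forall>i<length js. js ! i = a + i * d)"

end

theory Submission
  imports Defs
begin

lemma Zzeta_pow: "zeta n ^ m \<in> Zzeta n"
  unfolding Zzeta_def by (rule CollectI, rule exI[of _ "monom 1 m"]) (simp add: map_poly_monom poly_monom)

lemma Zzeta_of_nat: "of_nat m \<in> Zzeta n"
  unfolding Zzeta_def by (rule CollectI, rule exI[of _ "monom (int m) 0"]) (simp add: map_poly_monom poly_monom)

lemma map_poly_of_int_add: "map_poly (of_int :: int \<Rightarrow> 'b::comm_ring_1) (f + g) = map_poly of_int f + map_poly of_int g"
  by (rule poly_eqI) (simp add: coeff_map_poly)

lemma Zzeta_add: assumes "x \<in> Zzeta n" "y \<in> Zzeta n" shows "x + y \<in> Zzeta n"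
proof -
  obtain f g where "x = poly (map_poly of_int f) (zeta n)" "y = poly (map_poly of_int g) (zeta n)"
    using assms unfolding Zzeta_def by blast
  then have "x + y = poly (map_poly of_int (f + g)) (zeta n)" by (simp add: map_poly_of_int_add)
  then show ?thesis unfolding Zzeta_def by blast
qed

lemma zeta_pow_n: assumes "n > 0" shows "zeta n ^ n = 1"
proof -
  have "zeta n ^ n = exp (of_nat n * (2 * pi * \<i> / of_nat n))"
    unfolding zeta_def by (rule exp_of_nat_mult[symmetric])
  also have "\<dots> = exp (2 * pi * \<i>)" using assms by simp
  finally show ?thesis by simp
qed

lemma zeta_pow_ne1: assumes "0 < d" "d < n" shows "zeta n ^ d \<noteq> 1"
proof
  assume h: "zeta n ^ d = 1"
  have "zeta n ^ d = exp (of_nat d * (2 * pi * \<i> / of_nat n))"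
    unfolding zeta_def by (rule exp_of_nat_mult[symmetric])
  also have "\<dots> = cis (2 * pi * real d / real n)"
    by (simp add: cis_conv_exp mult_ac)
  finally have "cos (2 * pi * real d / real n) = 1" using h
    by (metis Re_complex_of_real cis.sel(1) of_real_1)
  then obtain j :: int where j: "2 * pi * real d / real n = real_of_int j * 2 * pi"
    using cos_one_2pi_int by blast
  then have "(2 * pi) * (real d / real n) = (2 * pi) * real_of_int j" by (simp add: mult_ac)
  then have "2 * pi = 0 \<or> real d / real n = real_of_int j" by (simp only: mult_cancel_left)
  then have "real d / real n = real_of_int j" by simp
  moreover have "0 < real d / real n" "real d / real n < 1" using assms by auto
  ultimately have "0 < real_of_int j" "real_of_int j < 1" by auto
  then have "0 < j" "j < 1" by simp_all
  then show False by linarith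
qed

lemma poly_sum_lt: fixes p :: "'a::comm_semiring_1 poly" shows "degree p < N \<Longrightarrow> poly p x = (\<Sum>l<N. coeff p l * x ^ l)"
proof -
  assume d: "degree p < N"
  have "poly p x = (\<Sum>l\<le>degree p. coeff p l * x ^ l)" by (rule poly_altdef)
  also have "\<dots> = (\<Sum>l<N. coeff p l * x ^ l)"
    using d by (intro sum.mono_neutral_left) (auto simp: coeff_eq_0)
  finally show ?thesis .
qed

lemma vander_zero:
  fixes z lam :: "nat \<Rightarrow> 'a::field"
  assumes inj: "inj_on z {..<m}" and eq: "\<forall>l<m. (\<Sum>r<m. lam r * z r ^ l) = 0" and r0: "r0 < m"
  shows "lam r0 = 0"
proof -
  define L where "L = (\<Prod>r\<in>{..<m}-{r0}. [:- z r, 1:])"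
  have "degree L \<le> (\<Sum>r\<in>{..<m}-{r0}. degree [:- z r, 1:])"
    unfolding L_def using degree_prod_sum_le[of "{..<m}-{r0}" "\<lambda>r. [:- z r, 1:]"] by (simp add: o_def)
  also have "\<dots> = m - 1" using r0 by simp
  finally have degL: "degree L < m" using r0 by linarith
  have "0 = (\<Sum>l<m. coeff L l * (\<Sum>r<m. lam r * z r ^ l))" using eq by simp
  also have "\<dots> = (\<Sum>l<m. \<Sum>r<m. coeff L l * (lam r * z r ^ l))"
    by (simp add: sum_distrib_left)
  also have "\<dots> = (\<Sum>r<m. \<Sum>l<m. coeff L l * (lam r * z r ^ l))"
    by (rule sum.swap)
  also have "\<dots> = (\<Sum>r<m. lam r * (\<Sum>l<m. coeff L l * z r ^ l))"
    by (simp add: sum_distrib_left mult_ac)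
  also have "\<dots> = (\<Sum>r<m. lam r * poly L (z r))" using poly_sum_lt[OF degL] by simp
  also have "\<dots> = lam r0 * poly L (z r0)"
  proof -
    have "(\<Sum>r<m. lam r * poly L (z r)) = lam r0 * poly L (z r0) + (\<Sum>r\<in>{..<m}-{r0}. lam r * poly L (z r))"
      using r0 by (subst sum.remove[of _ r0]) auto
    moreover have "poly L (z r) = 0" if "r \<in> {..<m}-{r0}" for r
      unfolding L_def poly_prod using that by (intro prod_zero) auto
    ultimately show ?thesis by simp
  qed
  finally have "lam r0 * poly L (z r0) = 0" by simp
  moreover have "poly L (z r0) \<noteq> 0"
    unfolding L_def poly_prod using inj r0 by (auto simp: inj_on_def)
  ultimately show ?thesis by simp
qed
lemma nonAP_witness:
  assumes "\<not> is_arith_prog js" "sorted_wrt (<) js"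
  shows "\<exists>i. 0 < i \<and> i + 1 < length js \<and> js!(i-1) + js!(i+1) \<noteq> 2 * js!i"
proof (rule ccontr)
  assume "\<not> ?thesis"
  then have H: "\<forall>i. 0<i \<and> i+1 < length js \<longrightarrow> js!(i-1) + js!(i+1) = 2*js!i" by blast
  define a where "a = js!0"
  define d where "d = js!1 - js!0"
  have "\<forall>i<length js. js!i = a + i*d"
  proof (intro allI impI)
    fix i assume "i < length js" then show "js!i = a + i*d"
    proof (induction i rule: less_induct)
      case (less i)
      show ?case
      proof (cases i)
        case 0 then show ?thesis by (simp add: a_def)
      next
        case (Suc i1) show ?thesis
        proof (cases i1)
          case 0
          have "js!0 < js!1" using assms(2) less.prems Suc 0 by (auto simp: sorted_wrt_iff_nth_less)
          then show ?thesis using Suc 0 by (simp add: a_def d_def)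
        next
          case (Suc i2)
          have e: "js!i2 + js!(i2+2) = 2*js!(i2+1)" using H[rule_format, of "i2+1"] less.prems \<open>i = Suc i1\<close> Suc by auto
          have "js!i2 = a + i2*d" "js!(i2+1) = a + (i2+1)*d" using less.IH less.prems \<open>i = Suc i1\<close> Suc by auto
          moreover have "(i2+1)*d = i2*d + d" "(i2+2)*d = i2*d + 2*d" by (simp_all add: algebra_simps)
          ultimately have "js!(i2+2) = a + (i2+2)*d" using e by linarith
          then show ?thesis using \<open>i = Suc i1\<close> Suc by simp
        qed
      qed
    qed
  qed
  then show False using assms(1) unfolding is_arith_prog_def by blast
qed

lemma exps:
  fixes jj :: "nat \<Rightarrow> nat"
  assumes mono: "\<And>a b. a < b \<Longrightarrow> b < k \<Longrightarrow> jj a < jj b"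
    and i0: "0 < i0" "i0 + 1 < k" "jj (i0-1) + jj (i0+1) \<noteq> 2 * jj i0"
  defines "pa \<equiv> \<lambda>r. if r = 2*k-1 then i0-1 else r div 2"
    and "pb \<equiv> \<lambda>r. if r = 2*k-1 then i0+1 else (r+1) div 2"
  shows "\<forall>r<2*k. pa r < k \<and> pb r < k" and "inj_on (\<lambda>r. jj (pa r) + jj (pb r)) {..<2*k}"
proof -
  show "\<forall>r<2*k. pa r < k \<and> pb r < k" unfolding pa_def pb_def using i0 by auto
  define e where "e = (\<lambda>r. jj (pa r) + jj (pb r))"
  have step: "e r < e (r+1)" if "r + 1 < 2*k-1" for r
  proof -
    obtain i where "r = 2*i \<or> r = 2*i+1" by (metis oddE evenE)
    then show ?thesis
    proof
      assume r: "r = 2*i"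
      have "e r = jj i + jj i" "e (r+1) = jj i + jj (i+1)"
        using that r unfolding e_def pa_def pb_def by auto
      moreover have "jj i < jj (i+1)" using mono that r by auto
      ultimately show ?thesis by simp
    next
      assume r: "r = 2*i+1"
      have "e r = jj i + jj (i+1)" "e (r+1) = jj (i+1) + jj (i+1)"
        using that r unfolding e_def pa_def pb_def by auto
      moreover have "jj i < jj (i+1)" using mono that r by auto
      ultimately show ?thesis by simp
    qed
  qed
  have smono: "r < r' \<Longrightarrow> r' < 2*k-1 \<Longrightarrow> e r < e r'" for r r'
  proof (induction r')
    case 0 then show ?case by simp
  next
    case (Suc r')
    then show ?case using step[of r'] by (cases "r = r'") auto
  qed
  define es where "es = jj (i0-1) + jj (i0+1)"
  have ees: "e (2*k-1) = es" unfolding e_def pa_def pb_def es_def by simp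
  have dv: "(2*i0-1) div 2 = i0-1" using i0(1) by (cases i0) auto
  have a1: "e (2*i0-1) = jj (i0-1) + jj i0" unfolding e_def pa_def pb_def using i0 dv by auto
  have a2: "e (2*i0) = jj i0 + jj i0" unfolding e_def pa_def pb_def using i0 by auto
  have a3: "e (2*i0+1) = jj i0 + jj (i0+1)" unfolding e_def pa_def pb_def using i0 by auto
  have l1: "jj (i0-1) < jj i0" "jj i0 < jj (i0+1)" using mono i0 by auto
  have ne: "e r \<noteq> es" if "r < 2*k-1" for r
  proof -
    consider "r < 2*i0-1" | "r = 2*i0-1" | "r = 2*i0" | "r = 2*i0+1" | "r > 2*i0+1" by linarith
    then show ?thesis
    proof cases
      case 1 then have "e r < e (2*i0-1)" using smono i0 by auto
      then show ?thesis using a1 l1 es_def by linarith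
    next
      case 2 then show ?thesis using a1 l1 es_def by simp
    next
      case 3 then show ?thesis using a2 i0 es_def by simp
    next
      case 4 then show ?thesis using a3 l1 es_def by simp
    next
      case 5 then have "e (2*i0+1) < e r" using smono i0 that by auto
      then show ?thesis using a3 l1 es_def by linarith
    qed
  qed
  show "inj_on (\<lambda>r. jj (pa r) + jj (pb r)) {..<2*k}"
    unfolding e_def[symmetric]
  proof (rule inj_onI)
    fix r r' assume r: "r \<in> {..<2*k}" and r': "r' \<in> {..<2*k}" and eq: "e r = e r'"
    show "r = r'"
    proof (rule ccontr)
      assume "r \<noteq> r'"
      then consider "r < r'" | "r' < r" by linarith
      then show False
      proof cases
        case 1 show False
        proof (cases "r' = 2*k-1")
          case True then show False using ne[of r] ees eq r r' \<open>r < r'\<close> by auto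
        next
          case False then have "r' < 2*k-1" using r r' by auto
          then show False using smono[of r r'] eq \<open>r < r'\<close> by auto
        qed
      next
        case 2 show False
        proof (cases "r = 2*k-1")
          case True then show False using ne[of r'] ees eq r r' \<open>r' < r\<close> by auto
        next
          case False then have "r < 2*k-1" using r r' by auto
          then show False using smono[of r' r] eq \<open>r' < r\<close> by auto
        qed
      qed
    qed
  qed
qed
theorem mainTheorem5:
  fixes n k p :: nat and js :: "nat list" and h :: "complex \<Rightarrow> 'a::{field,finite}"
  assumes "n \<ge> 7"
    and "length js = k" and "k \<ge> 3"
    and "sorted_wrt (<) js"
    and "2 * last js \<le> n - 1"
    and "\<not> is_arith_prog js"
    and "\<forall>S. S \<subseteq> {0..<n} \<and> card S = k \<longrightarrow> minorG n js (zeta n) S \<noteq> 0"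
    and "prime p" and "p \<notin> P_bad n js" and "\<not> p dvd n"
    and hom_add: "\<forall>x\<in>Zzeta n. \<forall>y\<in>Zzeta n. h (x + y) = h x + h y"
    and hom_mult: "\<forall>x\<in>Zzeta n. \<forall>y\<in>Zzeta n. h (x * y) = h x * h y"
    and hom_one: "h 1 = 1"
    and hom_surj: "h ` Zzeta n = UNIV"
    and above_p: "h (of_nat p) = 0"
  shows "\<not> RS_type k n (row_space (map_mat h (Gmat n js (zeta n))))"
proof
  assume RS: "RS_type k n (row_space (map_mat h (Gmat n js (zeta n))))"
  define w where "w = h (zeta n)"
  define Gb where "Gb = map_mat h (Gmat n js (zeta n))"
  have n0: "n > 0" using assms(1) by simp
  have Z0: "0 \<in> Zzeta n" using Zzeta_of_nat[of 0 n] by simp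
  have Z1: "1 \<in> Zzeta n" using Zzeta_of_nat[of 1 n] by simp
  have Zz: "zeta n \<in> Zzeta n" using Zzeta_pow[of n 1] by simp
  have h0: "h 0 = 0"
  proof -
    have E0: "h (0 + 0) = h 0 + h 0" using hom_add[rule_format, OF Z0 Z0] .
    have E00: "h (0 + 0) = h 0" by simp
    have E: "h 0 + h 0 = h 0" using E0[symmetric] E00 by (rule trans)
    have "h 0 = (h 0 + h 0) - h 0" by (rule add_diff_cancel_right'[symmetric])
    also have "\<dots> = h 0 - h 0" by (simp only: E)
    also have "\<dots> = 0" by (rule diff_self)
    finally show ?thesis .
  qed
  have hpow: "h (zeta n ^ m) = w ^ m" for m
  proof (induction m)
    case 0 then show ?case using hom_one by simp
  next
    case (Suc m)
    have "h (zeta n ^ Suc m) = h (zeta n * zeta n ^ m)" by simp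
    also have "\<dots> = h (zeta n) * h (zeta n ^ m)" using hom_mult[rule_format, OF Zz Zzeta_pow] .
    finally show ?case using Suc w_def by simp
  qed
  have hnat: "h (of_nat m) = of_nat m" for m
  proof (induction m)
    case 0 then show ?case using h0 by simp
  next
    case (Suc m)
    have "h (of_nat (Suc m)) = h (1 + of_nat m)" by simp
    also have "\<dots> = h 1 + h (of_nat m)" using hom_add[rule_format, OF Z1 Zzeta_of_nat] .
    finally show ?case using Suc hom_one by simp
  qed
  have Zsum: "(\<Sum>i<N. zeta n ^ f i) \<in> Zzeta n" for N :: nat and f
    by (induction N) (auto simp: Z0 Zzeta_add Zzeta_pow)
  have hsum: "h (\<Sum>i<N. zeta n ^ f i) = (\<Sum>i<N. w ^ f i)" for N :: nat and f
  proof (induction N)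
    case 0 then show ?case using h0 by simp
  next
    case (Suc N)
    have "h (\<Sum>i<Suc N. zeta n ^ f i) = h ((\<Sum>i<N. zeta n ^ f i) + zeta n ^ f N)" by simp
    also have "\<dots> = h (\<Sum>i<N. zeta n ^ f i) + h (zeta n ^ f N)" using hom_add[rule_format, OF Zsum Zzeta_pow] .
    finally show ?case using Suc hpow by simp
  qed
  have nnz: "of_nat n \<noteq> (0::'a)"
  proof
    assume nz: "of_nat n = (0::'a)"
    obtain a b where ab: "n * a = Suc (p * b)" using bezout_prime assms(8,10) by blast
    have p0: "of_nat p = (0::'a)" using above_p hnat[of p] by simp
    have "(of_nat (n * a) :: 'a) = of_nat (Suc (p * b))" using ab by (rule arg_cong)
    then have "(of_nat n :: 'a) * of_nat a = 1 + of_nat p * of_nat b" by (simp only: of_nat_mult of_nat_Suc)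
    then have "(0::'a) * of_nat a = 1 + 0 * of_nat b" by (simp only: nz p0)
    then show False by simp
  qed
  have word: "w ^ d \<noteq> 1" if d: "0 < d" "d < n" for d
  proof
    assume wd: "w ^ d = 1"
    define u where "u = zeta n ^ d"
    have u1: "u \<noteq> 1" unfolding u_def by (rule zeta_pow_ne1[OF d])
    have "u ^ n = zeta n ^ (n * d)" unfolding u_def by (simp add: power_mult[symmetric] mult.commute)
    also have "\<dots> = (zeta n ^ n) ^ d" by (rule power_mult)
    finally have un: "u ^ n = 1" using zeta_pow_n[OF n0] by simp
    have "(\<Sum>i<n. u ^ i) = 0" using u1 un by (simp add: sum_gp_strict)
    then have "(\<Sum>i<n. zeta n ^ (d * i)) = 0" unfolding u_def by (simp add: power_mult)
    then have "(\<Sum>i<n. w ^ (d * i)) = 0" using hsum[of "\<lambda>i. d * i" n] h0 by simp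
    moreover have "(\<Sum>i<n. w ^ (d * i)) = of_nat n" using wd by (simp add: power_mult)
    ultimately show False using nnz by simp
  qed
  have wn0: "w \<noteq> 0"
  proof
    assume "w = 0"
    then have "w ^ n = 0" using n0 by simp
    moreover have "w ^ n = 1" using hpow[of n] zeta_pow_n[OF n0] hom_one by simp
    ultimately show False by simp
  qed
  have Gb_dim: "dim_row Gb = k" "dim_col Gb = n" unfolding Gb_def Gmat_def using assms(2) by auto
  have Gb_ent: "Gb $$ (i, l) = w ^ (js ! i * l)" if "i < k" "l < n" for i l
    unfolding Gb_def Gmat_def using that assms(2) hpow by simp
  obtain D where D: "is_GRS_code k n D" "code_equiv n D (row_space Gb)"
    using RS unfolding RS_type_def Gb_def by blast
  obtain x v where xv: "inj_on x {0..<n}" "\<forall>j<n. v j \<noteq> 0" "D = row_space (GRS_matrix k n x v)"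
    using D(1) unfolding is_GRS_code_def by blast
  obtain \<sigma> c where sc: "\<sigma> permutes {0..<n}" "\<forall>j<n. c j \<noteq> 0"
    "row_space Gb = (\<lambda>u. vec n (\<lambda>j. c j * u $ \<sigma> j)) ` D"
    using D(2) unfolding code_equiv_def by blast
  have slt: "\<sigma> l < n" if "l < n" for l using permutes_in_image[OF sc(1)] that by simp
  have rowrep: "\<exists>F. degree F < k \<and> (\<forall>l<n. w ^ (js!i * l) = c l * v (\<sigma> l) * poly F (x (\<sigma> l)))"
    if i: "i < k" for i
  proof -
    have "row Gb i \<in> row_space Gb" unfolding row_space_def
    proof (rule CollectI, rule exI[of _ "unit_vec k i"], intro conjI)
      show "row Gb i = transpose_mat Gb *\<^sub>v unit_vec k i"
        by (rule eq_vecI) (simp_all add: Gb_dim i scalar_prod_right_unit)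
      show "unit_vec k i \<in> carrier_vec (dim_row Gb)" using Gb_dim by simp
    qed
    then obtain d where d: "d \<in> D" "row Gb i = vec n (\<lambda>j. c j * d $ \<sigma> j)" using sc(3) by auto
    then obtain \<alpha> where al: "\<alpha> \<in> carrier_vec k" "d = transpose_mat (GRS_matrix k n x v) *\<^sub>v \<alpha>"
      unfolding xv(3) row_space_def GRS_matrix_def by auto
    define F where "F = (\<Sum>t<k. monom (\<alpha> $ t) t)"
    have "degree F \<le> k - 1" unfolding F_def
      by (rule degree_sum_le) (auto intro: order.trans[OF degree_monom_le])
    then have degF: "degree F < k" using assms(3) by linarith
    have pF: "poly F y = (\<Sum>t<k. \<alpha> $ t * y ^ t)" for y by (simp add: F_def poly_sum poly_monom)
    have dj: "d $ j = v j * poly F (x j)" if "j < n" for j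
      using al that by (simp add: GRS_matrix_def scalar_prod_def pF sum_distrib_left atLeast0LessThan mult_ac)
    show ?thesis
    proof (intro exI conjI allI impI)
      show "degree F < k" by (rule degF)
      fix l assume l: "l < n"
      have "w ^ (js!i * l) = row Gb i $ l" using Gb_ent[OF i l] Gb_dim l i by (simp add: index_row)
      also have "\<dots> = c l * d $ \<sigma> l" using d(2) l by simp
      finally show "w ^ (js!i * l) = c l * v (\<sigma> l) * poly F (x (\<sigma> l))" using dj[OF slt[OF l]] by simp
    qed
  qed
  define F where "F = (\<lambda>i. SOME F. degree F < k \<and> (\<forall>l<n. w ^ (js!i * l) = c l * v (\<sigma> l) * poly F (x (\<sigma> l))))"
  have F: "degree (F i) < k" "\<And>l. l < n \<Longrightarrow> w ^ (js!i * l) = c l * v (\<sigma> l) * poly (F i) (x (\<sigma> l))"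
    if "i < k" for i
    using someI_ex[OF rowrep[OF that]] unfolding F_def by auto
  have jmono: "js!a < js!b" if "a < b" "b < k" for a b
    using assms(2,4) that by (simp add: sorted_wrt_iff_nth_less)
  obtain i0 where i0: "0 < i0" "i0 + 1 < k" "js!(i0-1) + js!(i0+1) \<noteq> 2 * js!i0"
    using nonAP_witness[OF assms(6,4)] assms(2) by blast
  define pa where "pa = (\<lambda>r. if r = 2*k-1 then i0-1 else r div 2)"
  define pb where "pb = (\<lambda>r. if r = 2*k-1 then i0+1 else (r+1) div 2)"
  have ex: "\<forall>r<2*k. pa r < k \<and> pb r < k" "inj_on (\<lambda>r. js!(pa r) + js!(pb r)) {..<2*k}"
    using exps[of k "\<lambda>i. js!i" i0, OF jmono i0] unfolding pa_def pb_def by simp_all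
  define m where "m = 2 * k"
  define e where "e = (\<lambda>r. js!(pa r) + js!(pb r))"
  have einj: "inj_on e {..<m}" using ex(2) unfolding e_def m_def .
  have pab: "pa r < k" "pb r < k" if "r < m" for r using ex(1) that unfolding m_def by auto
  have jlast: "js!a \<le> last js" if "a < k" for a
  proof -
    have "js \<noteq> []" using assms(2,3) by auto
    then have "last js = js!(k-1)" using assms(2) by (simp add: last_conv_nth)
    moreover have "js!a \<le> js!(k-1)"
    proof (cases "a = k-1")
      case False then have "a < k - 1" using that by linarith
      then show ?thesis using jmono[of a "k-1"] assms(3) by simp
    qed simp
    ultimately show ?thesis by simp
  qed
  have elt: "e r < n" if "r < m" for r
    using jlast[OF pab(1)[OF that]] jlast[OF pab(2)[OF that]] assms(5) n0 unfolding e_def by linarith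
  have mn: "m \<le> n"
  proof -
    have "card (e ` {..<m}) = m" using card_image[OF einj] by simp
    moreover have "card (e ` {..<m}) \<le> card {..<n}" by (rule card_mono) (auto simp: elt)
    ultimately show ?thesis by simp
  qed
  define P where "P = (\<lambda>r. F (pa r) * F (pb r))"
  have degP: "degree (P r) < m - 1" if "r < m" for r
  proof -
    have "degree (P r) \<le> degree (F (pa r)) + degree (F (pb r))" unfolding P_def by (rule degree_mult_le)
    moreover have "degree (F (pa r)) < k" "degree (F (pb r)) < k" using F(1) pab[OF that] by auto
    ultimately show ?thesis unfolding m_def by linarith
  qed
  have key: "w ^ (e r * l) = (c l * v (\<sigma> l))^2 * poly (P r) (x (\<sigma> l))" if "r < m" "l < n" for r l
  proof -
    have "w ^ (e r * l) = w ^ (js!(pa r) * l) * w ^ (js!(pb r) * l)"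
      unfolding e_def by (simp add: add_mult_distrib power_add)
    also have "\<dots> = (c l * v (\<sigma> l) * poly (F (pa r)) (x (\<sigma> l))) * (c l * v (\<sigma> l) * poly (F (pb r)) (x (\<sigma> l)))"
      using F(2)[OF pab(1)[OF that(1)] that(2)] F(2)[OF pab(2)[OF that(1)] that(2)] by simp
    finally show ?thesis unfolding P_def by (simp add: power2_eq_square mult_ac)
  qed
  have m0: "m - 1 < m" using assms(3) unfolding m_def by simp
  define Q where "Q = mat\<^sub>r m m (\<lambda>t. if t = m - 1 then 0\<^sub>v m else vec m (\<lambda>r. coeff (P r) t))"
  have Qc: "Q \<in> carrier_mat m m" unfolding Q_def by simp
  have detQ: "det Q = 0" unfolding Q_def by (rule det_row_0[OF m0]) simp
  obtain lv where lv: "lv \<in> carrier_vec m" "lv \<noteq> 0\<^sub>v m" "Q *\<^sub>v lv = 0\<^sub>v m"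
    using det_0_iff_vec_prod_zero_field[OF Qc] detQ by blast
  have coefsum: "(\<Sum>r<m. lv $ r * coeff (P r) t) = 0" for t
  proof (cases "t < m - 1")
    case True
    have "(Q *\<^sub>v lv) $ t = 0" using lv(3) True by simp
    then have "row Q t \<bullet> lv = 0" using True Qc by simp
    moreover have "row Q t = vec m (\<lambda>r. coeff (P r) t)" unfolding Q_def using True
      by (intro eq_vecI) auto
    ultimately show ?thesis using lv(1) by (simp add: scalar_prod_def atLeast0LessThan mult_ac)
  next
    case False
    then have "coeff (P r) t = 0" if "r < m" for r using degP[OF that] by (intro coeff_eq_0) simp
    then show ?thesis by simp
  qed
  have polysum: "(\<Sum>r<m. lv $ r * poly (P r) y) = 0" for y
  proof -
    have "(\<Sum>r<m. lv $ r * poly (P r) y) = (\<Sum>r<m. \<Sum>t<m. lv $ r * coeff (P r) t * y ^ t)"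
    proof (rule sum.cong)
      fix r assume "r \<in> {..<m}"
      then have "degree (P r) < m" using degP[of r] by auto
      then have "poly (P r) y = (\<Sum>t<m. coeff (P r) t * y ^ t)" by (rule poly_sum_lt)
      then show "lv $ r * poly (P r) y = (\<Sum>t<m. lv $ r * coeff (P r) t * y ^ t)"
        by (simp add: sum_distrib_left mult.assoc)
    qed simp
    also have "\<dots> = (\<Sum>t<m. \<Sum>r<m. lv $ r * coeff (P r) t * y ^ t)" by (rule sum.swap)
    also have "\<dots> = (\<Sum>t<m. (\<Sum>r<m. lv $ r * coeff (P r) t) * y ^ t)" by (simp add: sum_distrib_right)
    also have "\<dots> = 0" by (simp add: coefsum)
    finally show ?thesis .
  qed
  have vz: "\<forall>l<m. (\<Sum>r<m. lv $ r * (w ^ e r) ^ l) = 0"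
  proof (intro allI impI)
    fix l assume l: "l < m"
    then have ln: "l < n" using mn by simp
    have "(\<Sum>r<m. lv $ r * (w ^ e r) ^ l) = (\<Sum>r<m. (c l * v (\<sigma> l))^2 * (lv $ r * poly (P r) (x (\<sigma> l))))"
      using key ln by (intro sum.cong) (auto simp: power_mult[symmetric] mult_ac)
    also have "\<dots> = 0" by (simp add: sum_distrib_left[symmetric] polysum)
    finally show "(\<Sum>r<m. lv $ r * (w ^ e r) ^ l) = 0" .
  qed
  have winj: "inj_on (\<lambda>r. w ^ e r) {..<m}"
  proof (rule inj_onI)
    fix r r' assume r: "r \<in> {..<m}" and r': "r' \<in> {..<m}" and eq: "w ^ e r = w ^ e r'"
    have "e r = e r'"
    proof (rule ccontr)
      assume ne: "e r \<noteq> e r'"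
      have gen: False if "a < b" "b < n" "w ^ a = w ^ b" for a b
      proof -
        have "b = a + (b - a)" using that by simp
        then have "w ^ b = w ^ a * w ^ (b - a)" by (metis power_add)
        then have "w ^ a * w ^ (b - a) = w ^ a * 1" using that(3) by simp
        then have "w ^ (b - a) = 1" using wn0 by simp
        then show False using word[of "b - a"] that by simp
      qed
      show False
      proof (cases "e r < e r'")
        case True then show False using gen[of "e r" "e r'"] elt r' eq by auto
      next
        case False then have "e r' < e r" using ne by simp
        then show False using gen[of "e r'" "e r"] elt r eq by auto
      qed
    qed
    then show "r = r'" using einj r r' by (auto dest: inj_onD)
  qed
  have "lv $ r = 0" if "r < m" for r
    using vander_zero[OF winj vz that] .
  then have "lv = 0\<^sub>v m" using lv(1) by (intro eq_vecI) auto
  then show False using lv(2) by simp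
qed
end
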